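(* Let $r$ be an ELP rule over atoms $\mathcal{A}$ and epistemic literals $\mathcal{E}$, and let $\Pi_r = (\mathcal{A}, \mathcal{E}, \{ r \})$. Then $r$ is tautological if and only if $\mathcal{SE}_{\Pi_r}(\Phi) = \mathcal{S}_\mathcal{A}$ for each consistent guess $\Phi \subseteq \mathcal{E}$.
   Context: A literal over a set of atoms $\mathcal{A}$ is an atom $a$ or $\neg a$. An interpretation is $I\subseteq\mathcal{A}$; $I\models a$ iff $a\in I$, $I\models\neg\ell$ iff $I\not\models\ell$. A (plain) logic program $(\mathcal{A},\mathcal{R})$ has rules $a_1\vee\cdots\vee a_l \leftarrow a_{l+1},\ldots,a_m,\neg\ell_1,\ldots,\neg\ell_n$ ($\ell_i$ literals); $H(r)$ head, $B(r)$ body, $B^+(r)=\{a_{l+1},\ldots,a_m\}$; $M\models r$ iff $M\models B(r)$ implies $M\cap H(r)\neq\emptyset$; $\mathrm{Mods}(\Pi)$ is the set of models. GL-reduct: $\Pi^I=(\mathcal{A},\{H(r)\leftarrow B^+(r)\mid r\in\mathcal{R},\ I\models\neg\ell\ \forall\neg\ell\in B(r)\})$ ($\neg\neg\neg a$ treated as $\neg a$); answer sets: models $M$ with no $M'\subset M$ a model of $\Pi^M$. An SE-model of $\Pi$ is $(X,Y)$ with $X\subseteq Y\subseteq\mathcal{A}$, $Y\models\Pi$, $X\models\Pi^Y$; $\mathrm{SE}(\Pi)$ the set of SE-models; $\mathcal{S}_\mathcal{A}$ denotes the set of all pairs $(X,Y)$ with $X\subseteq Y\subseteq\mathcal{A}$.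 An ELP is $(\mathcal{A},\mathcal{E},\mathcal{R})$ with $\mathcal{E}$ a set of epistemic literals $\mathbf{not}\,\ell$ and rules (ELP rules) $a_1\vee\cdots\vee a_k\leftarrow \ell_1,\ldots,\ell_m,\xi_1,\ldots,\xi_j,\neg\xi_{j+1},\ldots,\neg\xi_n$, $\xi_i\in\mathcal{E}$. A guess is $\Phi\subseteq\mathcal{E}$; it is consistent iff whenever $\mathcal{E}$ contains both $\mathbf{not}\,a$ and $\mathbf{not}\,\neg a$, $\Phi$ contains at least one of them. $\mathcal{I}$ is $\Phi$-compatible w.r.t. $\mathcal{E}$ iff $\mathcal{I}\neq\emptyset$, every $\mathbf{not}\,\ell\in\Phi$ has some $I\in\mathcal{I}$ with $I\not\models\ell$, and every $\mathbf{not}\,\ell\in\mathcal{E}\setminus\Phi$ has $I\models\ell$ for all $I\in\mathcal{I}$. The epistemic reduct $\Pi^\Phi=(\mathcal{A},\mathcal{R}^\Phi)$ replaces each $\mathbf{not}\,\ell\in\Phi$ by $\top$ and every other $\mathbf{not}$ by $\neg$. $\Phi$ is realizable in $\Pi$ iff some subset of $\mathrm{Mods}(\Pi^\Phi)$ is $\Phi$-compatible. SE-function: $\mathcal{SE}_\Pi(\Phi)=\mathrm{SE}(\Pi^\Phi)$ if $\Phi$ is realizable in $\Pi$, else $\emptyset$. Candidate world views are sets $AS(\Pi^\Phi)$ that are $\Phi$-compatible; world views are those with subset-maximal guess. Two ELPs $\Pi_1,\Pi_2$ are strongly equivalent iff for every ELP $\Pi$, $\Pi_1\cup\Pi$ and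 $\Pi_2\cup\Pi$ (componentwise union) have the same world views. An ELP rule $r$ is tautological iff $\Pi_r=(\mathcal{A},\mathcal{E},\{r\})$ is strongly equivalent to $(\mathcal{A},\mathcal{E},\emptyset)$. *)

theory Defs
  imports Main
begin

text \<open>Literals over atoms: an atom a (Pos a) or its negation (Neg a).
  An epistemic literal "not l" is represented by the literal l it applies to.\<close>
datatype 'a lit = Pos 'a | Neg 'a

fun lit_atom :: "'a lit \<Rightarrow> 'a" where
  "lit_atom (Pos a) = a" | "lit_atom (Neg a) = a"

text \<open>Negated body elements of plain rules: an element of this type stands for
  the body literal (neg l) where l is an atom (NAtom a: the body literal is neg a),
  a negated atom (NNeg a: the body literal is neg neg a), or top (NTop: the body
  literal is neg top, i.e. falsum).\<close>
datatype 'a nbody = NAtom 'a | NNeg 'a | NTop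

datatype 'a prule = PRule (phead: "'a set") (ppos: "'a set") (pneg: "'a nbody set")

text \<open>ELP rule: head atoms, objective body literals (atoms and negated atoms),
  epistemic literals occurring positively and epistemic literals occurring negated.\<close>
datatype 'a erule = ERule (ehead: "'a set") (eposobj: "'a set") (enegobj: "'a set")
                          (eknow: "'a lit set") (enknow: "'a lit set")

type_synonym 'a elp = "'a set \<times> 'a lit set \<times> 'a erule set"

fun lit_sat :: "'a set \<Rightarrow> 'a lit \<Rightarrow> bool" where
  "lit_sat I (Pos a) = (a \<in> I)" | "lit_sat I (Neg a) = (a \<notin> I)"

fun nbody_sat :: "'a set \<Rightarrow> 'a nbody \<Rightarrow> bool" where
  "nbody_sat I (NAtom a) = (a \<notin> I)"
| "nbody_sat I (NNeg a) = (a \<in> I)"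
| "nbody_sat I NTop = False"

definition prule_sat :: "'a set \<Rightarrow> 'a prule \<Rightarrow> bool" where
  "prule_sat M r \<longleftrightarrow>
     ((ppos r \<subseteq> M \<and> (\<forall>n\<in>pneg r. nbody_sat M n)) \<longrightarrow> phead r \<inter> M \<noteq> {})"

definition mods :: "'a set \<Rightarrow> 'a prule set \<Rightarrow> 'a set set" where
  "mods A R = {M. M \<subseteq> A \<and> (\<forall>r\<in>R. prule_sat M r)}"

definition gl_reduct :: "'a set \<Rightarrow> 'a prule set \<Rightarrow> 'a prule set" where
  "gl_reduct I R = {PRule (phead r) (ppos r) {} | r. r \<in> R \<and> (\<forall>n\<in>pneg r. nbody_sat I n)}"

definition answer_sets :: "'a set \<Rightarrow> 'a prule set \<Rightarrow> 'a set set" where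
  "answer_sets A R = {M \<in> mods A R. \<not> (\<exists>M'. M' \<subset> M \<and> M' \<in> mods A (gl_reduct M R))}"

definition se_models :: "'a set \<Rightarrow> 'a prule set \<Rightarrow> ('a set \<times> 'a set) set" where
  "se_models A R = {(X, Y). X \<subseteq> Y \<and> Y \<in> mods A R \<and> X \<in> mods A (gl_reduct Y R)}"

definition se_all :: "'a set \<Rightarrow> ('a set \<times> 'a set) set" where
  "se_all A = {(X, Y). X \<subseteq> Y \<and> Y \<subseteq> A}"

text \<open>neg l for an epistemic literal "not l" not in the guess.\<close>
fun lit_neg :: "'a lit \<Rightarrow> 'a nbody" where
  "lit_neg (Pos a) = NAtom a"
| "lit_neg (Neg a) = NNeg a"

text \<open>neg neg l, with neg neg neg a treated as neg a.\<close>
fun lit_negneg :: "'a lit \<Rightarrow> 'a nbody" where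
  "lit_negneg (Pos a) = NNeg a"
| "lit_negneg (Neg a) = NAtom a"

text \<open>Epistemic reduct of a rule: "not l" in the guess becomes top (dropped from
  the body when positive, falsum = neg top when negated); any other "not l"
  becomes neg l.\<close>
definition ereduct_rule :: "'a lit set \<Rightarrow> 'a erule \<Rightarrow> 'a prule" where
  "ereduct_rule \<Phi> r = PRule (ehead r) (eposobj r)
     (NAtom ` enegobj r \<union> lit_neg ` (eknow r - \<Phi>) \<union> lit_negneg ` (enknow r - \<Phi>)
      \<union> (if enknow r \<inter> \<Phi> \<noteq> {} then {NTop} else {}))"

definition ereduct :: "'a lit set \<Rightarrow> 'a erule set \<Rightarrow> 'a prule set" where
  "ereduct \<Phi> R = ereduct_rule \<Phi> ` R"

definition consistent_guess :: "'a lit set \<Rightarrow> 'a lit set \<Rightarrow> bool" where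
  "consistent_guess E \<Phi> \<longleftrightarrow>
     (\<forall>a. Pos a \<in> E \<and> Neg a \<in> E \<longrightarrow> Pos a \<in> \<Phi> \<or> Neg a \<in> \<Phi>)"

definition compatible :: "'a lit set \<Rightarrow> 'a lit set \<Rightarrow> 'a set set \<Rightarrow> bool" where
  "compatible E \<Phi> \<I> \<longleftrightarrow> \<I> \<noteq> {}
     \<and> (\<forall>l\<in>\<Phi>. \<exists>I\<in>\<I>. \<not> lit_sat I l)
     \<and> (\<forall>l\<in>E - \<Phi>. \<forall>I\<in>\<I>. lit_sat I l)"

definition realizable :: "'a elp \<Rightarrow> 'a lit set \<Rightarrow> bool" where
  "realizable P \<Phi> = (case P of (A, E, R) \<Rightarrow>
     (\<exists>\<I> \<subseteq> mods A (ereduct \<Phi> R). compatible E \<Phi> \<I>))"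

definition se_fun :: "'a elp \<Rightarrow> 'a lit set \<Rightarrow> ('a set \<times> 'a set) set" where
  "se_fun P \<Phi> = (case P of (A, E, R) \<Rightarrow>
     (if realizable P \<Phi> then se_models A (ereduct \<Phi> R) else {}))"

definition cand_guess :: "'a elp \<Rightarrow> 'a lit set \<Rightarrow> bool" where
  "cand_guess P \<Phi> = (case P of (A, E, R) \<Rightarrow>
     \<Phi> \<subseteq> E \<and> compatible E \<Phi> (answer_sets A (ereduct \<Phi> R)))"

definition world_views :: "'a elp \<Rightarrow> 'a set set set" where
  "world_views P = (case P of (A, E, R) \<Rightarrow>
     {answer_sets A (ereduct \<Phi> R) | \<Phi>.
        cand_guess P \<Phi> \<and> \<not> (\<exists>\<Phi>'. \<Phi> \<subset> \<Phi>' \<and> cand_guess P \<Phi>')})"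

definition elp_union :: "'a elp \<Rightarrow> 'a elp \<Rightarrow> 'a elp" where
  "elp_union P Q = (case P of (A1, E1, R1) \<Rightarrow> case Q of (A2, E2, R2) \<Rightarrow>
     (A1 \<union> A2, E1 \<union> E2, R1 \<union> R2))"

definition erule_wf :: "'a set \<Rightarrow> 'a lit set \<Rightarrow> 'a erule \<Rightarrow> bool" where
  "erule_wf A E r \<longleftrightarrow> ehead r \<subseteq> A \<and> eposobj r \<subseteq> A \<and> enegobj r \<subseteq> A
     \<and> eknow r \<subseteq> E \<and> enknow r \<subseteq> E"

definition wf_elp :: "'a elp \<Rightarrow> bool" where
  "wf_elp P = (case P of (A, E, R) \<Rightarrow>
     finite A \<and> lit_atom ` E \<subseteq> A \<and> finite R \<and> (\<forall>r\<in>R. erule_wf A E r))"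

definition strongly_equivalent :: "'a elp \<Rightarrow> 'a elp \<Rightarrow> bool" where
  "strongly_equivalent P1 P2 \<longleftrightarrow>
     (\<forall>P. wf_elp P \<longrightarrow> world_views (elp_union P1 P) = world_views (elp_union P2 P))"

definition tautological :: "'a set \<Rightarrow> 'a lit set \<Rightarrow> 'a erule \<Rightarrow> bool" where
  "tautological A E r \<longleftrightarrow> strongly_equivalent (A, E, {r}) (A, E, {})"

end

theory Submission
  imports Defs
begin

lemma nbody_lit_neg[simp]: "nbody_sat M (lit_neg l) = (\<not> lit_sat M l)"
  by (cases l) auto
lemma nbody_lit_negneg[simp]: "nbody_sat M (lit_negneg l) = lit_sat M l"
  by (cases l) auto

lemma lit_neg_eq[simp]:
  "(lit_neg l = NAtom a) = (l = Pos a)" "(lit_neg l = NNeg a) = (l = Neg a)"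
  "(lit_negneg l = NNeg a) = (l = Pos a)" "(lit_negneg l = NAtom a) = (l = Neg a)"
  "lit_neg l \<noteq> NTop" "lit_negneg l \<noteq> NTop"
  "(NAtom a = lit_neg l) = (l = Pos a)" "(NNeg a = lit_neg l) = (l = Neg a)"
  "(NNeg a = lit_negneg l) = (l = Pos a)" "(NAtom a = lit_negneg l) = (l = Neg a)"
  "NTop \<noteq> lit_neg l" "NTop \<noteq> lit_negneg l"
  by (cases l; auto)+

lemma mods_insert: "mods U (insert p R) = mods U R \<inter> {M. prule_sat M p}"
  unfolding mods_def by auto

lemma gl_reduct_insert: "gl_reduct M (insert p R) =
  (if (\<forall>n\<in>pneg p. nbody_sat M n) then insert (PRule (phead p) (ppos p) {}) (gl_reduct M R)
   else gl_reduct M R)"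
  unfolding gl_reduct_def by auto

lemma ereduct_insert: "ereduct \<Phi> (insert r R) = insert (ereduct_rule \<Phi> r) (ereduct \<Phi> R)"
  unfolding ereduct_def by simp

lemma AS_iff: "M \<in> answer_sets U Q \<longleftrightarrow>
   M \<in> mods U Q \<and> (\<forall>M'. M' \<subset> M \<longrightarrow> M' \<notin> mods U (gl_reduct M Q))"
  by (auto simp: answer_sets_def)

lemma se_models_sub: "se_models A R \<subseteq> se_all A"
  by (auto simp: se_models_def se_all_def mods_def)

lemma nbody_local:
  "(\<forall>a. n = NAtom a \<or> n = NNeg a \<longrightarrow> a \<in> A) \<Longrightarrow> nbody_sat (M \<inter> A) n = nbody_sat M n"
  by (cases n) auto

lemma se_valid_AS:
  assumes valid: "se_models A {p} = se_all A" and AU: "A \<subseteq> U"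
    and hp: "phead p \<subseteq> A" "ppos p \<subseteq> A"
    and np: "\<forall>a. NAtom a \<in> pneg p \<or> NNeg a \<in> pneg p \<longrightarrow> a \<in> A"
  shows "answer_sets U (insert p R) = answer_sets U R"
proof -
  have loc: "(\<forall>n\<in>pneg p. nbody_sat (M \<inter> A) n) = (\<forall>n\<in>pneg p. nbody_sat M n)" for M
  proof -
    have "nbody_sat (M \<inter> A) n = nbody_sat M n" if "n \<in> pneg p" for n
      using np that by (cases n) auto
    then show ?thesis by auto
  qed
  have v1: "prule_sat Y p" if "Y \<subseteq> A" for Y
  proof -
    have "(Y, Y) \<in> se_models A {p}" using valid that by (auto simp: se_all_def)
    then show ?thesis by (auto simp: se_models_def mods_def)
  qed
  have v2: "prule_sat X (PRule (phead p) (ppos p) {})"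
    if "X \<subseteq> Y" "Y \<subseteq> A" "\<forall>n\<in>pneg p. nbody_sat Y n" for X Y
  proof -
    have "(X, Y) \<in> se_models A {p}" using valid that by (auto simp: se_all_def)
    then have "X \<in> mods A (gl_reduct Y {p})" by (auto simp: se_models_def)
    moreover have "PRule (phead p) (ppos p) {} \<in> gl_reduct Y {p}"
      using that(3) by (auto simp: gl_reduct_def)
    ultimately show ?thesis by (auto simp: mods_def)
  qed
  have s1: "prule_sat M p" for M
  proof -
    have "prule_sat (M \<inter> A) p" using v1 by blast
    then show ?thesis using loc[of M] hp unfolding prule_sat_def by blast
  qed
  have s2: "prule_sat M' (PRule (phead p) (ppos p) {})"
    if "M' \<subseteq> M" "\<forall>n\<in>pneg p. nbody_sat M n" for M M'
  proof -
    have "prule_sat (M' \<inter> A) (PRule (phead p) (ppos p) {})"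
      using v2[of "M' \<inter> A" "M \<inter> A"] that loc[of M] by blast
    then show ?thesis using hp unfolding prule_sat_def by auto
  qed
  show ?thesis
  proof (rule set_eqI)
    fix M
    let ?G = "(if (\<forall>n\<in>pneg p. nbody_sat M n) then insert (PRule (phead p) (ppos p) {}) (gl_reduct M R)
               else gl_reduct M R)"
    have e: "M' \<in> mods U ?G \<longleftrightarrow> M' \<in> mods U (gl_reduct M R)" if "M' \<subseteq> M" for M'
      using s2[OF that] by (auto simp: mods_insert)
    have e2: "(\<forall>M'. M' \<subset> M \<longrightarrow> M' \<notin> mods U ?G) \<longleftrightarrow> (\<forall>M'. M' \<subset> M \<longrightarrow> M' \<notin> mods U (gl_reduct M R))"
      using e by blast
    have e3: "M \<in> mods U R \<inter> {M. prule_sat M p} \<longleftrightarrow> M \<in> mods U R" using s1 by blast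
    show "M \<in> answer_sets U (insert p R) \<longleftrightarrow> M \<in> answer_sets U R"
      unfolding AS_iff mods_insert gl_reduct_insert e2 e3 ..
  qed
qed

lemma wv_eq:
  assumes "\<And>\<Psi> I. compatible E2 \<Psi> I \<Longrightarrow>
              answer_sets U (ereduct \<Psi> R1) = answer_sets U (ereduct \<Psi> R2)"
  shows "world_views (U, E2, R1) = world_views (U, E2, R2)"
proof -
  have c: "cand_guess (U, E2, R1) = cand_guess (U, E2, R2)"
  proof (rule ext)
    fix x
    show "cand_guess (U, E2, R1) x = cand_guess (U, E2, R2) x"
    proof
      assume h: "cand_guess (U, E2, R1) x"
      then have "compatible E2 x (answer_sets U (ereduct x R1))" by (simp add: cand_guess_def)
      then have "answer_sets U (ereduct x R1) = answer_sets U (ereduct x R2)" by (rule assms)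
      then show "cand_guess (U, E2, R2) x" using h by (simp add: cand_guess_def)
    next
      assume h: "cand_guess (U, E2, R2) x"
      then have "compatible E2 x (answer_sets U (ereduct x R2))" by (simp add: cand_guess_def)
      then have "answer_sets U (ereduct x R1) = answer_sets U (ereduct x R2)" by (rule assms)
      then show "cand_guess (U, E2, R1) x" using h by (simp add: cand_guess_def)
    qed
  qed
  have d: "cand_guess (U, E2, R2) \<Phi> \<Longrightarrow>
      answer_sets U (ereduct \<Phi> R1) = answer_sets U (ereduct \<Phi> R2)" for \<Phi>
  proof -
    assume "cand_guess (U, E2, R2) \<Phi>"
    then have "compatible E2 \<Phi> (answer_sets U (ereduct \<Phi> R2))" by (simp add: cand_guess_def)
    then show ?thesis by (rule assms)
  qed
  show ?thesis unfolding world_views_def prod.case c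
  proof (rule Collect_cong)
    fix x
    show "(\<exists>\<Phi>. x = answer_sets U (ereduct \<Phi> R1) \<and> cand_guess (U, E2, R2) \<Phi> \<and>
            \<not> (\<exists>\<Phi>'. \<Phi> \<subset> \<Phi>' \<and> cand_guess (U, E2, R2) \<Phi>')) =
          (\<exists>\<Phi>. x = answer_sets U (ereduct \<Phi> R2) \<and> cand_guess (U, E2, R2) \<Phi> \<and>
            \<not> (\<exists>\<Phi>'. \<Phi> \<subset> \<Phi>' \<and> cand_guess (U, E2, R2) \<Phi>'))"
    proof
      assume "\<exists>\<Phi>. x = answer_sets U (ereduct \<Phi> R1) \<and> cand_guess (U, E2, R2) \<Phi> \<and>
            \<not> (\<exists>\<Phi>'. \<Phi> \<subset> \<Phi>' \<and> cand_guess (U, E2, R2) \<Phi>')"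
      then obtain \<Phi> where h: "x = answer_sets U (ereduct \<Phi> R1)" "cand_guess (U, E2, R2) \<Phi>"
        "\<not> (\<exists>\<Phi>'. \<Phi> \<subset> \<Phi>' \<and> cand_guess (U, E2, R2) \<Phi>')" by blast
      have "x = answer_sets U (ereduct \<Phi> R2)" using h(1) d[OF h(2)] by simp
      then show "\<exists>\<Phi>. x = answer_sets U (ereduct \<Phi> R2) \<and> cand_guess (U, E2, R2) \<Phi> \<and>
            \<not> (\<exists>\<Phi>'. \<Phi> \<subset> \<Phi>' \<and> cand_guess (U, E2, R2) \<Phi>')" using h(2,3) by blast
    next
      assume "\<exists>\<Phi>. x = answer_sets U (ereduct \<Phi> R2) \<and> cand_guess (U, E2, R2) \<Phi> \<and>
            \<not> (\<exists>\<Phi>'. \<Phi> \<subset> \<Phi>' \<and> cand_guess (U, E2, R2) \<Phi>')"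
      then obtain \<Phi> where h: "x = answer_sets U (ereduct \<Phi> R2)" "cand_guess (U, E2, R2) \<Phi>"
        "\<not> (\<exists>\<Phi>'. \<Phi> \<subset> \<Phi>' \<and> cand_guess (U, E2, R2) \<Phi>')" by blast
      have "x = answer_sets U (ereduct \<Phi> R1)" using h(1) d[OF h(2)] by simp
      then show "\<exists>\<Phi>. x = answer_sets U (ereduct \<Phi> R1) \<and> cand_guess (U, E2, R2) \<Phi> \<and>
            \<not> (\<exists>\<Phi>'. \<Phi> \<subset> \<Phi>' \<and> cand_guess (U, E2, R2) \<Phi>')" using h(2,3) by blast
    qed
  qed
qed

lemma rhs_taut:
  assumes wf: "wf_elp (A, E, {r})"
    and H: "\<forall>\<Phi>. \<Phi> \<subseteq> E \<and> consistent_guess E \<Phi> \<longrightarrow> se_fun (A, E, {r}) \<Phi> = se_all A"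
  shows "tautological A E r"
  unfolding tautological_def strongly_equivalent_def
proof (intro allI impI)
  fix P :: "'a elp"
  obtain A' E' R' where P: "P = (A', E', R')" by (cases P) auto
  from wf have EA: "lit_atom ` E \<subseteq> A" and rwf: "erule_wf A E r" unfolding wf_elp_def by auto
  from rwf have HA: "ehead r \<subseteq> A" and BA: "eposobj r \<subseteq> A" and NA: "enegobj r \<subseteq> A"
     and KE: "eknow r \<subseteq> E" and K'E: "enknow r \<subseteq> E" unfolding erule_wf_def by auto
  have PA: "a \<in> A" if "Pos a \<in> E" for a using EA that by force
  have NgA: "a \<in> A" if "Neg a \<in> E" for a using EA that by force
  have "world_views (A \<union> A', E \<union> E', insert r R') = world_views (A \<union> A', E \<union> E', R')"
  proof (rule wv_eq)
    fix \<Psi> I assume comp: "compatible (E \<union> E') \<Psi> I"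
    have cons: "consistent_guess E (\<Psi> \<inter> E)"
      unfolding consistent_guess_def
    proof (intro allI impI)
      fix a assume aE: "Pos a \<in> E \<and> Neg a \<in> E"
      show "Pos a \<in> \<Psi> \<inter> E \<or> Neg a \<in> \<Psi> \<inter> E"
      proof (rule ccontr)
        assume nn: "\<not> (Pos a \<in> \<Psi> \<inter> E \<or> Neg a \<in> \<Psi> \<inter> E)"
        from comp obtain I0 where I0: "I0 \<in> I" unfolding compatible_def by blast
        have "lit_sat I0 (Pos a)" "lit_sat I0 (Neg a)"
          using comp I0 aE nn unfolding compatible_def by blast+
        then show False by simp
      qed
    qed
    have "se_fun (A, E, {r}) (\<Psi> \<inter> E) = se_all A" using H cons by blast
    moreover have "({}, {}) \<in> se_all A" by (simp add: se_all_def)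
    ultimately have val0: "se_models A (ereduct (\<Psi> \<inter> E) {r}) = se_all A"
      unfolding se_fun_def by (auto split: if_splits)
    have e1: "eknow r - (\<Psi> \<inter> E) = eknow r - \<Psi>" "enknow r - (\<Psi> \<inter> E) = enknow r - \<Psi>"
      "enknow r \<inter> (\<Psi> \<inter> E) = enknow r \<inter> \<Psi>" using KE K'E by blast+
    have eq: "ereduct_rule (\<Psi> \<inter> E) r = ereduct_rule \<Psi> r"
      unfolding ereduct_rule_def e1 ..
    have val: "se_models A {ereduct_rule \<Psi> r} = se_all A"
      using val0 eq by (simp add: ereduct_def)
    have at: "\<forall>a. NAtom a \<in> pneg (ereduct_rule \<Psi> r) \<or> NNeg a \<in> pneg (ereduct_rule \<Psi> r) \<longrightarrow> a \<in> A"
      unfolding ereduct_rule_def using NA KE K'E PA NgA by auto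
    show "answer_sets (A \<union> A') (ereduct \<Psi> (insert r R')) = answer_sets (A \<union> A') (ereduct \<Psi> R')"
      unfolding ereduct_insert
      by (rule se_valid_AS[OF val _ _ _ at]) (use HA BA in \<open>auto simp: ereduct_rule_def\<close>)
  qed
  then show "world_views (elp_union (A, E, {r}) P) = world_views (elp_union (A, E, {}) P)"
    using P by (simp add: elp_union_def)
qed

lemma realizable_valid:
  assumes wf: "wf_elp (A, E, {r})" and PE: "\<Phi> \<subseteq> E" and cons: "consistent_guess E \<Phi>"
    and val: "se_models A (ereduct \<Phi> {r}) = se_all A"
  shows "realizable (A, E, {r}) \<Phi>"
proof -
  from wf have EA: "lit_atom ` E \<subseteq> A" unfolding wf_elp_def by auto
  have PA: "a \<in> A" if "Pos a \<in> E" for a using EA that by force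
  have NgA: "a \<in> A" if "Neg a \<in> E" for a using EA that by force
  define T where "T = {a. Pos a \<in> E - \<Phi>}"
  define F where "F = {a. Neg a \<in> E - \<Phi>}"
  have allm: "Y \<in> mods A (ereduct \<Phi> {r})" if "Y \<subseteq> A" for Y
  proof -
    have "(Y, Y) \<in> se_models A (ereduct \<Phi> {r})" using val that by (auto simp: se_all_def)
    then show ?thesis by (auto simp: se_models_def)
  qed
  have TA: "T \<subseteq> A" using PA by (auto simp: T_def)
  have comp: "compatible E \<Phi> {T, A - F}"
    unfolding compatible_def
  proof (intro conjI ballI)
    show "{T, A - F} \<noteq> {}" by simp
  next
    fix l assume l: "l \<in> \<Phi>"
    show "\<exists>I\<in>{T, A - F}. \<not> lit_sat I l"
    proof (cases l)
      case (Pos a) then show ?thesis using l by (auto simp: T_def)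
    next
      case (Neg a) then show ?thesis using l PE NgA by (auto simp: F_def)
    qed
  next
    fix l I assume l: "l \<in> E - \<Phi>" and I: "I \<in> {T, A - F}"
    show "lit_sat I l"
    proof (cases l)
      case (Pos a) then show ?thesis using l I PA cons by (auto simp: T_def F_def consistent_guess_def)
    next
      case (Neg a) then show ?thesis using l I cons by (auto simp: T_def F_def consistent_guess_def)
    qed
  qed
  have sub: "{T, A - F} \<subseteq> mods A (ereduct \<Phi> {r})" using allm TA by auto
  show ?thesis unfolding realizable_def prod.case using comp sub by blast
qed

lemma red_plain[simp]: "ereduct_rule \<Psi> (ERule h p {} {} {}) = PRule h p {}"
  by (simp add: ereduct_rule_def)
lemma red_K[simp]: "ereduct_rule \<Psi> (ERule {} {} {} {l} {}) =
    PRule {} {} (if l \<in> \<Psi> then {} else {lit_neg l})"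
  by (auto simp: ereduct_rule_def)
lemma red_P[simp]: "ereduct_rule \<Psi> (ERule {} {} {} {} {l}) =
    PRule {} {} (if l \<in> \<Psi> then {NTop} else {lit_negneg l})"
  by (auto simp: ereduct_rule_def)
lemma sat_PRule: "prule_sat M (PRule h p n) = ((p \<subseteq> M \<and> (\<forall>x\<in>n. nbody_sat M x)) \<longrightarrow> h \<inter> M \<noteq> {})"
  by (simp add: prule_sat_def)
lemma mods_ered: "M \<in> mods U (ereduct \<Psi> R) \<longleftrightarrow> M \<subseteq> U \<and> (\<forall>e\<in>R. prule_sat M (ereduct_rule \<Psi> e))"
  by (auto simp: mods_def ereduct_def)
lemma mods_gl_ered: "M' \<in> mods U (gl_reduct M (ereduct \<Psi> R)) \<longleftrightarrow> M' \<subseteq> U \<and>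
   (\<forall>e\<in>R. (\<forall>n\<in>pneg (ereduct_rule \<Psi> e). nbody_sat M n) \<longrightarrow> prule_sat M' (PRule (ehead e) (eposobj e) {}))"
proof -
  have h: "phead (ereduct_rule \<Psi> e) = ehead e" "ppos (ereduct_rule \<Psi> e) = eposobj e" for e
    by (simp_all add: ereduct_rule_def)
  show ?thesis
    unfolding mods_def ereduct_def gl_reduct_def
    apply (auto simp: h)
    apply (metis h image_eqI)
    done
qed
lemma lit_sat_insert: "lit_atom l \<noteq> c \<Longrightarrow> lit_sat (insert c Y) l = lit_sat Y l"
  by (cases l) auto

lemma construct:
  fixes A :: "'a set" and E :: "'a lit set" and r :: "'a erule"
  assumes inf: "infinite (UNIV :: 'a set)"
    and wf: "wf_elp (A, E, {r})"
    and YA: "Y \<subseteq> A" and ZY: "Z \<subseteq> Y"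
    and negY: "\<forall>n\<in>pneg (ereduct_rule \<Phi> r). nbody_sat Y n"
    and BZ: "eposobj r \<subseteq> Z" and HZ: "ehead r \<inter> Z = {}"
    and HY: "ehead r \<inter> Y = {} \<Longrightarrow> Z = Y"
  shows "\<not> tautological A E r"
proof
  assume taut: "tautological A E r"
  from wf have finA: "finite A" and EA: "lit_atom ` E \<subseteq> A" and rwf: "erule_wf A E r"
    unfolding wf_elp_def by auto
  from rwf have HA: "ehead r \<subseteq> A" and BA: "eposobj r \<subseteq> A" and NA: "enegobj r \<subseteq> A"
     and KE: "eknow r \<subseteq> E" and K'E: "enknow r \<subseteq> E" unfolding erule_wf_def by auto
  have PA: "a \<in> A" if "Pos a \<in> E" for a using EA that by force
  have NgA: "a \<in> A" if "Neg a \<in> E" for a using EA that by force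
  have latA: "lit_atom l \<in> A" if "l \<in> E" for l using EA that by blast
  obtain c0 where c0: "c0 \<notin> A" using ex_new_if_finite[OF inf finA] by auto
  obtain c1 where c1: "c1 \<notin> insert c0 A" using ex_new_if_finite[OF inf] finA by (meson finite_insert)
  obtain c2 where c2: "c2 \<notin> insert c1 (insert c0 A)" using ex_new_if_finite[OF inf] finA
    by (meson finite_insert)
  define K where "K = eknow r"
  define K' where "K' = enknow r"
  define N where "N = enegobj r"
  define H where "H = ehead r"
  define B where "B = eposobj r"
  have NTop: "NTop \<notin> pneg (ereduct_rule \<Phi> r)" using negY by fastforce
  have K'Phi: "K' \<inter> \<Phi> = {}" using NTop unfolding K'_def ereduct_rule_def by (auto split: if_splits)
  have K'Y: "lit_sat Y l" if "l \<in> K'" for l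
  proof -
    have "lit_negneg l \<in> pneg (ereduct_rule \<Phi> r)"
      using that K'Phi unfolding K'_def ereduct_rule_def by auto
    then show ?thesis using negY by fastforce
  qed
  have KY: "\<not> lit_sat Y l" if "l \<in> K" "l \<notin> \<Phi>" for l
  proof -
    have "lit_neg l \<in> pneg (ereduct_rule \<Phi> r)"
      using that unfolding K_def ereduct_rule_def by auto
    then show ?thesis using negY by fastforce
  qed
  have NY: "a \<notin> Y" if "a \<in> N" for a
  proof -
    have "NAtom a \<in> pneg (ereduct_rule \<Phi> r)"
      using that unfolding N_def ereduct_rule_def by auto
    then show ?thesis using negY by fastforce
  qed
  have KK': "K \<inter> K' = {}" using KY K'Y K'Phi by blast
  define Phs where "Phs = E - K'"
  define T where "T = {a. Pos a \<in> K'}"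
  define F where "F = {a. Neg a \<in> K'}"
  define U where "U = insert c2 (insert c1 (insert c0 A))"
  define \<rho> where "\<rho> = ereduct_rule Phs r"
  have PhsE: "Phs \<subseteq> E" and K'E': "K' \<subseteq> E" using K'E by (auto simp: Phs_def K'_def)
  have rho: "\<rho> = PRule H B (NAtom ` N \<union> lit_negneg ` K')"
  proof -
    have e: "eknow r - Phs = {}" "enknow r - Phs = K'" "enknow r \<inter> Phs = {}"
      using KE K'E KK' by (auto simp: Phs_def K_def K'_def)
    show ?thesis unfolding \<rho>_def ereduct_rule_def H_def B_def N_def e by simp
  qed
  have TA: "T \<subseteq> A" using PA K'E' by (auto simp: T_def)
  have TF: "T \<inter> F = {}"
  proof -
    { fix a assume "a \<in> T" "a \<in> F"
      then have "Pos a \<in> K'" "Neg a \<in> K'" by (auto simp: T_def F_def)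
      then have "lit_sat Y (Pos a)" "lit_sat Y (Neg a)" using K'Y by blast+
      then have False by simp }
    then show ?thesis by blast
  qed
  define posOK where "posOK = (\<lambda>M. (c0 \<in> M \<or> c1 \<in> M \<or> c2 \<in> M)
     \<and> (c0 \<in> M \<longrightarrow> Z \<subseteq> M \<and> (\<forall>y\<in>Y - Z. \<forall>y'\<in>Y - Z. y' \<in> M \<longrightarrow> y \<in> M))
     \<and> (c1 \<in> M \<longrightarrow> T \<subseteq> M) \<and> (c2 \<in> M \<longrightarrow> A - F \<subseteq> M))"
  define R where "R = insert (ERule {c0, c1, c2} {} {} {} {})
     ((\<lambda>z. ERule {z} {c0} {} {} {}) ` Z
      \<union> (\<lambda>(y, y'). ERule {y} {y', c0} {} {} {}) ` ((Y - Z) \<times> (Y - Z))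
      \<union> (\<lambda>t. ERule {t} {c1} {} {} {}) ` T
      \<union> (\<lambda>x. ERule {x} {c2} {} {} {}) ` (A - F)
      \<union> (\<lambda>l. ERule {} {} {} {l} {}) ` K'
      \<union> (\<lambda>l. ERule {} {} {} {} {l}) ` Phs)"
  have K'nPhs: "l \<notin> Phs" if "l \<in> K'" for l using that by (simp add: Phs_def)
  have ballR: "(\<forall>e\<in>R. Pr e) \<longleftrightarrow> Pr (ERule {c0, c1, c2} {} {} {} {})
     \<and> (\<forall>z\<in>Z. Pr (ERule {z} {c0} {} {} {}))
     \<and> (\<forall>y\<in>Y - Z. \<forall>y'\<in>Y - Z. Pr (ERule {y} {y', c0} {} {} {}))
     \<and> (\<forall>t\<in>T. Pr (ERule {t} {c1} {} {} {}))
     \<and> (\<forall>x\<in>A - F. Pr (ERule {x} {c2} {} {} {}))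
     \<and> (\<forall>l\<in>K'. Pr (ERule {} {} {} {l} {}))
     \<and> (\<forall>l\<in>Phs. Pr (ERule {} {} {} {} {l}))" for Pr
    unfolding R_def by (simp add: ball_Un Ball_image_comp comp_def)
  have d1: "prule_sat M (PRule {c0, c1, c2} {} {}) \<longleftrightarrow> (c0 \<in> M \<or> c1 \<in> M \<or> c2 \<in> M)" for M
    by (auto simp: sat_PRule)
  have d2: "(\<forall>z\<in>Z. prule_sat M (PRule {z} {c0} {})) \<longleftrightarrow> (c0 \<in> M \<longrightarrow> Z \<subseteq> M)" for M
    by (auto simp: sat_PRule)
  have d3: "(\<forall>y\<in>Y - Z. \<forall>y'\<in>Y - Z. prule_sat M (PRule {y} {y', c0} {})) \<longleftrightarrow>
      (c0 \<in> M \<longrightarrow> (\<forall>y\<in>Y - Z. \<forall>y'\<in>Y - Z. y' \<in> M \<longrightarrow> y \<in> M))" for M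
    by (auto simp: sat_PRule)
  have d4: "(\<forall>t\<in>T. prule_sat M (PRule {t} {c1} {})) \<longleftrightarrow> (c1 \<in> M \<longrightarrow> T \<subseteq> M)" for M
    by (auto simp: sat_PRule)
  have d5: "(\<forall>x\<in>A - F. prule_sat M (PRule {x} {c2} {})) \<longleftrightarrow> (c2 \<in> M \<longrightarrow> A - F \<subseteq> M)" for M
    by (auto simp: sat_PRule)
  have d6: "(\<forall>l\<in>K'. prule_sat M (ereduct_rule Phs (ERule {} {} {} {l} {}))) \<longleftrightarrow> (\<forall>l\<in>K'. lit_sat M l)" for M
    using K'nPhs by (simp add: sat_PRule)
  have d7: "(\<forall>l\<in>Phs. prule_sat M (ereduct_rule Phs (ERule {} {} {} {} {l})))" for M
    by (simp add: sat_PRule)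
  have g6: "(\<forall>l\<in>K'. (\<forall>n\<in>pneg (ereduct_rule Phs (ERule {} {} {} {l} {})). nbody_sat M n) \<longrightarrow>
        prule_sat M' (PRule (ehead (ERule {} {} {} {l} {})) (eposobj (ERule {} {} {} {l} {})) {}))
      \<longleftrightarrow> (\<forall>l\<in>K'. lit_sat M l)" for M M'
    using K'nPhs by (simp add: sat_PRule)
  have g7: "(\<forall>l\<in>Phs. (\<forall>n\<in>pneg (ereduct_rule Phs (ERule {} {} {} {} {l})). nbody_sat M n) \<longrightarrow>
        prule_sat M' (PRule (ehead (ERule {} {} {} {} {l})) (eposobj (ERule {} {} {} {} {l})) {}))" for M M'
    by simp
  have gp: "((\<forall>n\<in>pneg (ereduct_rule Phs (ERule h p {} {} {})). nbody_sat M n) \<longrightarrow>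
        prule_sat M' (PRule (ehead (ERule h p {} {} {})) (eposobj (ERule h p {} {} {})) {}))
      \<longleftrightarrow> prule_sat M' (PRule h p {})" for M M' h p
    by simp
  have char1: "M \<in> mods U (ereduct Phs R) \<longleftrightarrow> M \<subseteq> U \<and> posOK M \<and> (\<forall>l\<in>K'. lit_sat M l)" for M
    unfolding mods_ered ballR red_plain d1 d2 d3 d4 d5 d6 posOK_def using d7[of M] by blast
  have char2: "M' \<in> mods U (gl_reduct M (ereduct Phs R)) \<longleftrightarrow>
      M' \<subseteq> U \<and> posOK M' \<and> (\<forall>l\<in>K'. lit_sat M l)" for M M'
    unfolding mods_gl_ered ballR gp d1 d2 d3 d4 d5 g6 posOK_def using g7[of M M'] by blast
  have c01: "c0 \<noteq> c1" "c1 \<notin> A" "c0 \<noteq> c2" "c1 \<noteq> c2" "c2 \<notin> A" using c1 c2 by auto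
  have YU: "Y \<subseteq> U" and AU: "A \<subseteq> U" using YA by (auto simp: U_def)
  have K'sat: "lit_sat M l" if "l \<in> K'" "\<forall>a. Pos a \<in> K' \<longrightarrow> a \<in> M" "\<forall>a. Neg a \<in> K' \<longrightarrow> a \<notin> M" for l M
    using that by (cases l) auto
  have K'A: "lit_atom l \<in> A" if "l \<in> K'" for l using latA K'E' that by blast
  define S where "S = answer_sets U (ereduct Phs R)"
  define S' where "S' = answer_sets U (ereduct Phs (insert r R))"
  have S'eq: "S' = answer_sets U (insert \<rho> (ereduct Phs R))"
    unfolding S'_def ereduct_insert \<rho>_def ..
  have W1S: "insert c1 T \<in> S"
    unfolding S_def AS_iff char1 char2
  proof (intro conjI allI impI)
    show "insert c1 T \<subseteq> U" using TA by (auto simp: U_def)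
    show "posOK (insert c1 T)" unfolding posOK_def using c0 c01 TA by auto
    show "\<forall>l\<in>K'. lit_sat (insert c1 T) l"
    proof
      fix l assume l: "l \<in> K'"
      have "lit_sat T l" using l TF by (intro K'sat) (auto simp: T_def F_def)
      then show "lit_sat (insert c1 T) l" using lit_sat_insert[of l c1 T] K'A[OF l] c01 by auto
    qed
    fix M' assume M': "M' \<subset> insert c1 T"
    show "\<not> (M' \<subseteq> U \<and> posOK M' \<and> (\<forall>l\<in>K'. lit_sat (insert c1 T) l))"
    proof
      assume "M' \<subseteq> U \<and> posOK M' \<and> (\<forall>l\<in>K'. lit_sat (insert c1 T) l)"
      then have "posOK M'" by blast
      moreover have "c0 \<notin> M'" "c2 \<notin> M'" using M' c0 c01 TA by auto
      ultimately have "insert c1 T \<subseteq> M'" unfolding posOK_def by auto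
      then show False using M' by auto
    qed
  qed
  have W2S: "insert c2 (A - F) \<in> S"
    unfolding S_def AS_iff char1 char2
  proof (intro conjI allI impI)
    show "insert c2 (A - F) \<subseteq> U" by (auto simp: U_def)
    show "posOK (insert c2 (A - F))" unfolding posOK_def using c0 c01 by auto
    show "\<forall>l\<in>K'. lit_sat (insert c2 (A - F)) l"
    proof
      fix l assume l: "l \<in> K'"
      have "lit_sat (A - F) l" using l TF TA by (intro K'sat) (auto simp: T_def F_def)
      then show "lit_sat (insert c2 (A - F)) l" using lit_sat_insert[of l c2 "A - F"] K'A[OF l] c01 by auto
    qed
    fix M' assume M': "M' \<subset> insert c2 (A - F)"
    show "\<not> (M' \<subseteq> U \<and> posOK M' \<and> (\<forall>l\<in>K'. lit_sat (insert c2 (A - F)) l))"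
    proof
      assume "M' \<subseteq> U \<and> posOK M' \<and> (\<forall>l\<in>K'. lit_sat (insert c2 (A - F)) l)"
      then have "posOK M'" by blast
      moreover have "c0 \<notin> M'" "c1 \<notin> M'" using M' c0 c01 by auto
      ultimately have "insert c2 (A - F) \<subseteq> M'" unfolding posOK_def by auto
      then show False using M' by auto
    qed
  qed
  have compS: "compatible E Phs S"
    unfolding compatible_def
  proof (intro conjI ballI)
    show "S \<noteq> {}" using W1S by auto
  next
    fix l assume l: "l \<in> Phs"
    show "\<exists>I\<in>S. \<not> lit_sat I l"
    proof (cases l)
      case (Pos a)
      have "a \<in> A" using l Pos PhsE PA by auto
      moreover have "a \<notin> T" using l Pos by (auto simp: T_def Phs_def)
      ultimately have "\<not> lit_sat (insert c1 T) l" using Pos c01 by auto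
      then show ?thesis using W1S by blast
    next
      case (Neg a)
      have "a \<in> A" using l Neg PhsE NgA by auto
      moreover have "a \<notin> F" using l Neg by (auto simp: F_def Phs_def)
      ultimately have "\<not> lit_sat (insert c2 (A - F)) l" using Neg by auto
      then show ?thesis using W2S by blast
    qed
  next
    fix l I assume l: "l \<in> E - Phs" and I: "I \<in> S"
    have "l \<in> K'" using l by (auto simp: Phs_def)
    moreover have "I \<in> mods U (ereduct Phs R)" using I unfolding S_def AS_iff by blast
    ultimately show "lit_sat I l" unfolding char1 by blast
  qed
  have onlyPhs: "\<Psi> = Phs" if "\<Psi> \<subseteq> E" "compatible E \<Psi> (answer_sets U (ereduct \<Psi> R0))" "R \<subseteq> R0"
    for \<Psi> R0
  proof (rule ccontr)
    assume ne: "\<Psi> \<noteq> Phs"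
    from that(2) obtain M where M: "M \<in> answer_sets U (ereduct \<Psi> R0)" unfolding compatible_def by blast
    then have Mm: "M \<in> mods U (ereduct \<Psi> R0)" unfolding AS_iff by blast
    have sat: "prule_sat M (ereduct_rule \<Psi> e)" if "e \<in> R0" for e using Mm that unfolding mods_ered by blast
    show False
    proof (cases "\<exists>l. l \<in> \<Psi> \<and> l \<notin> Phs")
      case True
      then obtain l where l: "l \<in> \<Psi>" "l \<notin> Phs" by blast
      then have "l \<in> K'" using that(1) by (auto simp: Phs_def)
      then have "ERule {} {} {} {l} {} \<in> (\<lambda>l. ERule {} {} {} {l} {}) ` K'" by (rule imageI)
      moreover have "(\<lambda>l. ERule {} {} {} {l} {}) ` K' \<subseteq> R" unfolding R_def by (rule subsetI) simp
      ultimately have "ERule {} {} {} {l} {} \<in> R0" using that(3) by blast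
      from sat[OF this] show False using l by (simp add: sat_PRule)
    next
      case False
      then obtain l where l: "l \<in> Phs" "l \<notin> \<Psi>" using ne that(1) by blast
      then have "ERule {} {} {} {} {l} \<in> (\<lambda>l. ERule {} {} {} {} {l}) ` Phs" using imageI[OF l(1)] by blast
      moreover have "(\<lambda>l. ERule {} {} {} {} {l}) ` Phs \<subseteq> R" unfolding R_def by (rule subsetI) simp
      ultimately have "ERule {} {} {} {} {l} \<in> R0" using that(3) by blast
      from sat[OF this] have "\<not> lit_sat M l" using l by (simp add: sat_PRule)
      moreover have "l \<in> E - \<Psi>" using l PhsE by auto
      ultimately show False using that(2) M unfolding compatible_def by blast
    qed
  qed
  have M0U: "insert c0 Y \<subseteq> U" using YU by (auto simp: U_def)
  have c0Y: "c0 \<notin> Y" "c1 \<notin> Y" "c2 \<notin> Y" using YA c0 c01 by auto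
  have M0K': "\<forall>l\<in>K'. lit_sat (insert c0 Y) l"
    using K'Y K'A c0 lit_sat_insert by metis
  have negM0: "\<forall>n\<in>pneg \<rho>. nbody_sat (insert c0 Y) n"
  proof
    fix n assume "n \<in> pneg \<rho>"
    then consider a where "a \<in> N" "n = NAtom a" | l where "l \<in> K'" "n = lit_negneg l"
      unfolding rho by auto
    then show "nbody_sat (insert c0 Y) n"
    proof cases
      case 1 then show ?thesis using NY NA c0 by (auto simp: N_def)
    next
      case 2 then show ?thesis using M0K' by simp
    qed
  qed
  have ZA: "Z \<subseteq> A" using ZY YA by blast
  have SneS': "S \<noteq> S'"
  proof (cases "H \<inter> Y = {}")
    case True
    then have ZeY: "Z = Y" using HY by (simp add: H_def)
    have "insert c0 Y \<in> S"
      unfolding S_def AS_iff char1 char2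
    proof (intro conjI allI impI)
      show "insert c0 Y \<subseteq> U" by (rule M0U)
      show "posOK (insert c0 Y)" unfolding posOK_def using ZeY c0Y c01 by auto
      show "\<forall>l\<in>K'. lit_sat (insert c0 Y) l" by (rule M0K')
      fix M' assume M': "M' \<subset> insert c0 Y"
      show "\<not> (M' \<subseteq> U \<and> posOK M' \<and> (\<forall>l\<in>K'. lit_sat (insert c0 Y) l))"
      proof
        assume "M' \<subseteq> U \<and> posOK M' \<and> (\<forall>l\<in>K'. lit_sat (insert c0 Y) l)"
        then have "posOK M'" by blast
        moreover have "c1 \<notin> M'" "c2 \<notin> M'" using M' c0Y c01 by auto
        ultimately have "insert c0 Y \<subseteq> M'" unfolding posOK_def using ZeY by auto
        then show False using M' by auto
      qed
    qed
    moreover have "insert c0 Y \<notin> S'"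
    proof
      assume "insert c0 Y \<in> S'"
      then have "prule_sat (insert c0 Y) \<rho>" unfolding S'eq AS_iff mods_insert by blast
      moreover have "B \<subseteq> insert c0 Y" using BZ ZeY by (auto simp: B_def)
      moreover have "H \<inter> insert c0 Y = {}" using True HA c0 by (auto simp: H_def)
      ultimately show False using negM0 unfolding rho sat_PRule by simp
    qed
    ultimately show ?thesis by blast
  next
    case False
    then have ZneY: "Z \<noteq> Y" using HZ by (auto simp: H_def)
    have "insert c0 Y \<notin> S"
    proof
      assume "insert c0 Y \<in> S"
      then have "\<forall>M'. M' \<subset> insert c0 Y \<longrightarrow> M' \<notin> mods U (gl_reduct (insert c0 Y) (ereduct Phs R))"
        unfolding S_def AS_iff by blast
      moreover have "insert c0 Z \<subset> insert c0 Y" using ZY ZneY c0Y by auto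
      moreover have "insert c0 Z \<in> mods U (gl_reduct (insert c0 Y) (ereduct Phs R))"
        unfolding char2
      proof (intro conjI)
        show "insert c0 Z \<subseteq> U" using ZY M0U by auto
        show "posOK (insert c0 Z)" unfolding posOK_def using c0Y ZY c0 YA c01 by auto
        show "\<forall>l\<in>K'. lit_sat (insert c0 Y) l" by (rule M0K')
      qed
      ultimately show False by blast
    qed
    moreover have "insert c0 Y \<in> S'"
      unfolding S'eq AS_iff mods_insert gl_reduct_insert
    proof (intro conjI allI impI)
      have p1: "posOK (insert c0 Y)" unfolding posOK_def using ZY c0Y c01 by auto
      have m1: "insert c0 Y \<in> mods U (ereduct Phs R)" unfolding char1 using M0U p1 M0K' by blast
      have m2: "prule_sat (insert c0 Y) \<rho>" using False unfolding rho sat_PRule by auto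
      show "insert c0 Y \<in> mods U (ereduct Phs R) \<inter> {M. prule_sat M \<rho>}" using m1 m2 by blast
      fix M' assume M': "M' \<subset> insert c0 Y"
      show "M' \<notin> mods U (if \<forall>n\<in>pneg \<rho>. nbody_sat (insert c0 Y) n
              then insert (PRule (phead \<rho>) (ppos \<rho>) {}) (gl_reduct (insert c0 Y) (ereduct Phs R))
              else gl_reduct (insert c0 Y) (ereduct Phs R))"
      proof
        assume "M' \<in> mods U (if \<forall>n\<in>pneg \<rho>. nbody_sat (insert c0 Y) n
              then insert (PRule (phead \<rho>) (ppos \<rho>) {}) (gl_reduct (insert c0 Y) (ereduct Phs R))
              else gl_reduct (insert c0 Y) (ereduct Phs R))"
        then have "M' \<in> mods U (insert (PRule (phead \<rho>) (ppos \<rho>) {}) (gl_reduct (insert c0 Y) (ereduct Phs R)))"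
          unfolding if_P[OF negM0] .
        then have m: "M' \<in> mods U (gl_reduct (insert c0 Y) (ereduct Phs R))"
          and rs: "prule_sat M' (PRule H B {})"
          unfolding mods_insert rho by auto
        from m have pM: "posOK M'" unfolding char2 by blast
        have "c1 \<notin> M'" "c2 \<notin> M'" using M' c0Y c01 by auto
        then have c0M: "c0 \<in> M'" and ZM: "Z \<subseteq> M'"
          and loop: "\<forall>y\<in>Y - Z. \<forall>y'\<in>Y - Z. y' \<in> M' \<longrightarrow> y \<in> M'"
          using pM unfolding posOK_def by auto
        show False
        proof (cases "\<exists>y'\<in>Y - Z. y' \<in> M'")
          case True
          then have "Y - Z \<subseteq> M'" using loop by blast
          then have "insert c0 Y \<subseteq> M'" using ZM c0M by blast
          then show False using M' by auto
        next
          case False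
          then have "M' \<subseteq> insert c0 Z" using M' by auto
          moreover have "B \<subseteq> M'" using BZ ZM by (auto simp: B_def)
          ultimately show False using rs HZ HA c0 by (auto simp: sat_PRule H_def)
        qed
      qed
    qed
    ultimately show ?thesis by blast
  qed
  have inWV2: "S \<in> world_views (U, E, R)"
  proof -
    have "cand_guess (U, E, R) Phs" unfolding cand_guess_def using PhsE compS S_def by simp
    moreover have "\<not> (\<exists>\<Phi>'. Phs \<subset> \<Phi>' \<and> cand_guess (U, E, R) \<Phi>')"
      using onlyPhs[of _ R] unfolding cand_guess_def by auto
    ultimately show ?thesis unfolding world_views_def S_def by auto
  qed
  have notWV1: "S \<notin> world_views (U, E, insert r R)"
  proof
    assume "S \<in> world_views (U, E, insert r R)"
    then obtain \<Psi> where "S = answer_sets U (ereduct \<Psi> (insert r R))" "cand_guess (U, E, insert r R) \<Psi>"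
      unfolding world_views_def by auto
    moreover then have "\<Psi> = Phs" using onlyPhs[of \<Psi> "insert r R"] unfolding cand_guess_def by auto
    ultimately show False using SneS' unfolding S'_def by simp
  qed
  have finE: "finite E"
  proof -
    have "E \<subseteq> Pos ` A \<union> Neg ` A"
    proof
      fix l assume l: "l \<in> E" then show "l \<in> Pos ` A \<union> Neg ` A"
      proof (cases l)
        case (Pos a) then have "a \<in> A" using PA l by blast
        then show ?thesis using Pos by blast
      next
        case (Neg a) then have "a \<in> A" using NgA l by blast
        then show ?thesis using Neg by blast
      qed
    qed
    then show ?thesis using finA by (meson finite_Un finite_imageI finite_subset)
  qed
  have wfP: "wf_elp (U, E, R)"
    unfolding wf_elp_def prod.case
  proof (intro conjI)
    show "finite U" using finA by (simp add: U_def)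
    show "lit_atom ` E \<subseteq> U" using EA AU by blast
    have "finite Z" "finite (Y - Z)" "finite T" "finite (A - F)" "finite K'" "finite Phs"
      using finA YA ZY TA finE K'E' PhsE by (auto intro: finite_subset)
    then show "finite R" unfolding R_def by auto
    show "\<forall>e\<in>R. erule_wf U E e"
      unfolding R_def erule_wf_def using YA ZY TA K'E' PhsE by (auto simp: U_def)
  qed
  have "world_views (elp_union (A, E, {r}) (U, E, R)) = world_views (elp_union (A, E, {}) (U, E, R))"
    using taut wfP unfolding tautological_def strongly_equivalent_def by blast
  moreover have "elp_union (A, E, {r}) (U, E, R) = (U, E, insert r R)"
    "elp_union (A, E, {}) (U, E, R) = (U, E, R)" using AU by (auto simp: elp_union_def)
  ultimately show False using inWV2 notWV1 by simp
qed

lemma gl_reduct_single: "gl_reduct Y {p} =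
   (if \<forall>n\<in>pneg p. nbody_sat Y n then {PRule (phead p) (ppos p) {}} else {})"
  unfolding gl_reduct_def by auto

theorem lemma4:
  fixes A :: "'a set" and E :: "'a lit set" and r :: "'a erule"
  assumes "infinite (UNIV :: 'a set)"
    and "wf_elp (A, E, {r})"
  shows "tautological A E r \<longleftrightarrow>
           (\<forall>\<Phi>. \<Phi> \<subseteq> E \<and> consistent_guess E \<Phi> \<longrightarrow> se_fun (A, E, {r}) \<Phi> = se_all A)"
proof
  assume taut: "tautological A E r"
  show "\<forall>\<Phi>. \<Phi> \<subseteq> E \<and> consistent_guess E \<Phi> \<longrightarrow> se_fun (A, E, {r}) \<Phi> = se_all A"
  proof (intro allI impI)
    fix \<Phi> assume \<Phi>: "\<Phi> \<subseteq> E \<and> consistent_guess E \<Phi>"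
    define \<rho> where "\<rho> = ereduct_rule \<Phi> r"
    have red1: "ereduct \<Phi> {r} = {\<rho>}" by (simp add: ereduct_def \<rho>_def)
    have hp: "phead \<rho> = ehead r" "ppos \<rho> = eposobj r" by (simp_all add: \<rho>_def ereduct_rule_def)
    have val: "se_models A (ereduct \<Phi> {r}) = se_all A"
    proof (rule ccontr)
      assume ne: "se_models A (ereduct \<Phi> {r}) \<noteq> se_all A"
      have ne': "se_models A {\<rho>} \<noteq> se_all A" using ne red1 by simp
      then obtain p where p: "p \<in> se_all A" "p \<notin> se_models A {\<rho>}"
        using se_models_sub[of A "{\<rho>}"] by blast
      obtain X Y where "p = (X, Y)" by (cases p)
      with p have XY: "(X, Y) \<in> se_all A" "(X, Y) \<notin> se_models A {\<rho>}" by auto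
      then have XY1: "X \<subseteq> Y" "Y \<subseteq> A" by (auto simp: se_all_def)
      with XY(2) have nm: "\<not> (Y \<in> mods A {\<rho>} \<and> X \<in> mods A (gl_reduct Y {\<rho>}))"
        by (auto simp: se_models_def)
      have "\<exists>Z. Z \<subseteq> Y \<and> (\<forall>n\<in>pneg \<rho>. nbody_sat Y n) \<and> eposobj r \<subseteq> Z \<and> ehead r \<inter> Z = {}
               \<and> (ehead r \<inter> Y = {} \<longrightarrow> Z = Y)"
      proof (cases "prule_sat Y \<rho>")
        case False
        then show ?thesis unfolding prule_sat_def hp by blast
      next
        case True
        then have "Y \<in> mods A {\<rho>}" using XY1 by (auto simp: mods_def)
        with nm have Xn: "X \<notin> mods A (gl_reduct Y {\<rho>})" by blast
        have pn: "\<forall>n\<in>pneg \<rho>. nbody_sat Y n"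
        proof (rule ccontr)
          assume "\<not> (\<forall>n\<in>pneg \<rho>. nbody_sat Y n)"
          then have "gl_reduct Y {\<rho>} = {}" by (simp add: gl_reduct_single)
          then show False using Xn XY1 by (auto simp: mods_def)
        qed
        then have "\<not> prule_sat X (PRule (ehead r) (eposobj r) {})"
          using Xn XY1 by (auto simp: mods_def gl_reduct_single hp)
        then have BX: "eposobj r \<subseteq> X" "ehead r \<inter> X = {}" by (auto simp: sat_PRule)
        have "ehead r \<inter> Y \<noteq> {}" using True pn BX XY1 unfolding prule_sat_def hp by blast
        then show ?thesis using BX XY1 pn by blast
      qed
      then obtain Z where Z: "Z \<subseteq> Y" "\<forall>n\<in>pneg (ereduct_rule \<Phi> r). nbody_sat Y n"
        "eposobj r \<subseteq> Z" "ehead r \<inter> Z = {}" "ehead r \<inter> Y = {} \<Longrightarrow> Z = Y"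
        unfolding \<rho>_def by blast
      have "\<not> tautological A E r"
        by (rule construct[OF assms XY1(2) Z(1) Z(2) Z(3) Z(4) Z(5)])
      then show False using taut by blast
    qed
    have real: "realizable (A, E, {r}) \<Phi>"
      using realizable_valid[OF assms(2)] \<Phi> val by blast
    show "se_fun (A, E, {r}) \<Phi> = se_all A"
      unfolding se_fun_def using real val by simp
  qed
next
  assume "\<forall>\<Phi>. \<Phi> \<subseteq> E \<and> consistent_guess E \<Phi> \<longrightarrow> se_fun (A, E, {r}) \<Phi> = se_all A"
  then show "tautological A E r" by (rule rhs_taut[OF assms(2)])
qed

end
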